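(* Let $\varepsilon,\delta\ge0$, $\alpha\ge0$, $p\in[0,1]$. Suppose $\mathcal M$ is an $(\varepsilon,\delta)$-DP mechanism for offline prefix-sum estimation on inputs $s\in\mathbb R^n$ that outputs $(a^1,\dots,a^n)$ with $\max_{k\in[n]}|a^k-\sum_{i=1}^k s_i|\le\alpha$ with probability at least $p$. Then the mechanism that, given a frequency vector $f\in\mathbb N^n$, sorts $f$ in non-increasing order to obtain $s$ and outputs $\mathcal M(s)$ is $(\varepsilon,\delta)$-DP for static $\textsc{TopK}$, and with probability at least $p$ its output satisfies $|a^k-\|f\|_{\mathrm{top}\text{-}k}|\le\alpha$ for all $k\in[n]$.
   Context: Offline prefix-sum estimation: input $s=(s_1,\dots,s_n)\in\mathbb R^n$, output estimates $a^k$ of $\sum_{i\le k}s_i$ for all $k\in[n]$; inputs $s,s'$ are neighboring if $\|s-s'\|_1\le1$. Static $\textsc{TopK}$: input a frequency vector $f\in\mathbb N^n$ (of a set of updates given up front); output estimates of $\|f\|_{\mathrm{top}\text{-}k}=\sum_{i=1}^kf_{\sigma(i)}$ for all $k\in[n]$, where $\sigma$ sorts $f$ in non-increasing order; two frequency vectors are neighboring if they agree in all coordinates except one, where they differ by exactly $1$. $(\varepsilon,\delta)$-DP: $\Pr[\mathcal A(x)\in S]\le e^\varepsilon\Pr[\mathcal A(y)\in S]+\delta$ for neighbors $x,y$ and all output sets $S$. *)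

theory Defs
  imports "HOL-Probability.Probability"
begin

definition DP :: "('a \<Rightarrow> 'a \<Rightarrow> bool) \<Rightarrow> 'a set \<Rightarrow> ('a \<Rightarrow> 'b measure) \<Rightarrow> real \<Rightarrow> real \<Rightarrow> bool" where
  "DP nb X M \<epsilon> \<delta> \<longleftrightarrow>
     (\<forall>x\<in>X. \<forall>y\<in>X. nb x y \<longrightarrow>
        (\<forall>S\<in>sets (M x). measure (M x) S \<le> exp \<epsilon> * measure (M y) S + \<delta>))"

text \<open>Inputs s in R^n are lists of length n; entry s_i is s ! (i-1).
  Neighbouring for prefix sums: L1 distance at most 1.\<close>
definition prefix_nb :: "real list \<Rightarrow> real list \<Rightarrow> bool" where
  "prefix_nb s s' \<longleftrightarrow> length s = length s' \<and> (\<Sum>i<length s. \<bar>s ! i - s' ! i\<bar>) \<le> 1"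

definition freq_nb :: "nat list \<Rightarrow> nat list \<Rightarrow> bool" where
  "freq_nb f g \<longleftrightarrow> length f = length g \<and>
     (\<exists>i<length f. (\<forall>j<length f. j \<noteq> i \<longrightarrow> f ! j = g ! j) \<and>
                   \<bar>int (f ! i) - int (g ! i)\<bar> = 1)"

definition sort_desc :: "nat list \<Rightarrow> nat list" where
  "sort_desc f = rev (sort f)"

definition topk_norm :: "nat list \<Rightarrow> nat \<Rightarrow> nat" where
  "topk_norm f k = sum_list (take k (sort_desc f))"

text \<open>Output a :: nat => real, where a k is the estimate for index k in [n].
  Accuracy event for prefix sums of s (length n).\<close>
definition prefix_good :: "nat \<Rightarrow> real \<Rightarrow> real list \<Rightarrow> (nat \<Rightarrow> real) set \<Rightarrow> (nat \<Rightarrow> real) set" where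
  "prefix_good n \<alpha> s \<Omega> = {a \<in> \<Omega>. \<forall>k\<in>{1..n}. \<bar>a k - (\<Sum>i<k. s ! i)\<bar> \<le> \<alpha>}"

definition topk_good :: "nat \<Rightarrow> real \<Rightarrow> nat list \<Rightarrow> (nat \<Rightarrow> real) set \<Rightarrow> (nat \<Rightarrow> real) set" where
  "topk_good n \<alpha> f \<Omega> = {a \<in> \<Omega>. \<forall>k\<in>{1..n}. \<bar>a k - real (topk_norm f k)\<bar> \<le> \<alpha>}"

end

theory Submission
  imports Defs
begin

lemma sort_incr:
  fixes f :: "nat list"
  assumes i: "i < length f"
  shows "\<exists>j<length f. sort (f[i := f!i+1]) = (sort f)[j := sort f ! j + 1]"
proof -
  define sf where "sf = sort f"
  define v where "v = f ! i"
  have len: "length sf = length f" by (simp add: sf_def)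
  have srt: "sorted sf" by (simp add: sf_def)
  define J where "J = {k. k < length f \<and> sf ! k = v}"
  have "v \<in> set sf" using i by (simp add: sf_def v_def)
  then obtain k where k: "k < length sf" "sf ! k = v" by (auto simp: in_set_conv_nth)
  have fin: "finite J" by (simp add: J_def)
  have ne: "J \<noteq> {}" using k len by (auto simp: J_def)
  define j where "j = Max J"
  have jJ: "j \<in> J" using fin ne by (simp add: j_def)
  hence jl: "j < length f" and jv: "sf ! j = v" by (auto simp: J_def)
  have after: "sf ! q > v" if "j < q" "q < length f" for q
  proof -
    have "sf ! j \<le> sf ! q" using srt that len by (intro sorted_nth_mono) auto
    moreover have "q \<notin> J" using that fin j_def Max_ge leD by blast
    ultimately show ?thesis using jv that by (auto simp: J_def)
  qed
  have before: "sf ! q \<le> v" if "q \<le> j" for q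
    using sorted_nth_mono[OF srt that] jl len jv by simp
  define g' where "g' = sf[j := sf ! j + 1]"
  have "sorted g'"
    unfolding sorted_iff_nth_mono
  proof (intro allI impI)
    fix a b assume ab: "a \<le> b" "b < length g'"
    hence bl: "b < length f" by (simp add: g'_def len)
    show "g' ! a \<le> g' ! b"
    proof (cases "a = j")
      case True
      then show ?thesis
      proof (cases "b = j")
        case False
        then have "j < b" using ab True by simp
        then show ?thesis using after[of b] bl True False jv len by (simp add: g'_def)
      qed simp
    next
      case False
      show ?thesis
      proof (cases "b = j")
        case True
        then show ?thesis using before[of a] ab False jv len jl by (simp add: g'_def)
      next
        case False2: False
        then show ?thesis using False sorted_nth_mono[OF srt ab(1)] bl len by (simp add: g'_def)
      qed
    qed
  qed
  moreover have "mset g' = mset (f[i := f!i+1])"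
    using i jl len jv by (simp add: g'_def mset_update sf_def v_def)
  ultimately have "sort (f[i := f!i+1]) = g'" by (intro properties_for_sort) auto
  thus ?thesis using jl by (auto simp: g'_def sf_def)
qed

lemma l1_update:
  fixes xs :: "nat list"
  assumes "j < length xs"
  shows "prefix_nb (map real (rev xs)) (map real (rev (xs[j := xs!j+1])))"
proof -
  define m where "m = length xs - j - 1"
  have m: "m < length xs" using assms by (simp add: m_def)
  have r: "rev (xs[j := xs!j+1]) = (rev xs)[m := rev xs ! m + 1]"
    using assms by (simp add: rev_update m_def rev_nth)
  have "(\<Sum>q<length xs. \<bar>map real (rev xs) ! q - map real ((rev xs)[m := rev xs ! m + 1]) ! q\<bar>)
      = (\<Sum>q<length xs. if q = m then 1 else 0)"
    by (intro sum.cong) (auto simp: nth_list_update)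
  also have "\<dots> = 1" using m by simp
  finally show ?thesis unfolding prefix_nb_def r by simp
qed

lemma prefix_nb_sym: "prefix_nb a b \<Longrightarrow> prefix_nb b a"
  unfolding prefix_nb_def by (auto simp: abs_minus_commute)

lemma sort_desc_nb:
  assumes "freq_nb f g"
  shows "prefix_nb (map real (sort_desc f)) (map real (sort_desc g))"
proof -
  from assms obtain i where i: "i < length f" and len: "length f = length g"
    and oth: "\<forall>j<length f. j \<noteq> i \<longrightarrow> f ! j = g ! j"
    and d: "\<bar>int (f ! i) - int (g ! i)\<bar> = 1" unfolding freq_nb_def by blast
  have gen: "prefix_nb (map real (sort_desc a)) (map real (sort_desc b))"
    if ab: "i < length a" "length a = length b" "\<forall>j<length a. j \<noteq> i \<longrightarrow> a ! j = b ! j"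
       "b ! i = a ! i + 1" for a b
  proof -
    have bu: "b = a[i := a!i+1]" using ab by (intro nth_equalityI) (auto simp: nth_list_update)
    obtain j where j: "j < length a" "sort b = (sort a)[j := sort a ! j + 1]"
      using sort_incr[OF ab(1)] unfolding bu[symmetric] by blast
    show ?thesis unfolding sort_desc_def j(2) using l1_update[of j "sort a"] j(1) by simp
  qed
  show ?thesis
  proof (cases "g ! i = f ! i + 1")
    case True
    then show ?thesis using gen[of f g] i len oth by blast
  next
    case False
    then have "f ! i = g ! i + 1" using d by linarith
    then show ?thesis using gen[of g f] i len oth by (metis prefix_nb_sym)
  qed
qed

theorem mainTheorem16:
  fixes M :: "real list \<Rightarrow> (nat \<Rightarrow> real) measure"
    and N :: "(nat \<Rightarrow> real) measure"
    and n :: nat and \<epsilon> \<delta> \<alpha> p :: real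
  assumes "\<epsilon> \<ge> 0" and "\<delta> \<ge> 0" and "\<alpha> \<ge> 0" and "0 \<le> p" and "p \<le> 1"
    and mech: "\<forall>s. length s = n \<longrightarrow> prob_space (M s) \<and> sets (M s) = sets N"
    and dp: "DP prefix_nb {s. length s = n} M \<epsilon> \<delta>"
    and acc: "\<forall>s. length s = n \<longrightarrow>
               prefix_good n \<alpha> s (space (M s)) \<in> sets (M s) \<and>
               measure (M s) (prefix_good n \<alpha> s (space (M s))) \<ge> p"
  shows "DP freq_nb {f. length f = n} (\<lambda>f. M (map real (sort_desc f))) \<epsilon> \<delta> \<and>
         (\<forall>f. length f = n \<longrightarrow>
             (let A = M (map real (sort_desc f)) in
               topk_good n \<alpha> f (space A) \<in> sets A \<and> measure A (topk_good n \<alpha> f (space A)) \<ge> p))"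
proof
  show "DP freq_nb {f. length f = n} (\<lambda>f. M (map real (sort_desc f))) \<epsilon> \<delta>"
    unfolding DP_def
  proof (intro ballI impI)
    fix x y S assume x: "x \<in> {f. length f = n}" and y: "y \<in> {f. length f = n}" and nb: "freq_nb x y"
      and S: "S \<in> sets (M (map real (sort_desc x)))"
    have xx: "map real (sort_desc x) \<in> {s. length s = n}" and yy: "map real (sort_desc y) \<in> {s. length s = n}"
      using x y by (auto simp: sort_desc_def)
    show "measure (M (map real (sort_desc x))) S \<le> exp \<epsilon> * measure (M (map real (sort_desc y))) S + \<delta>"
      using dp sort_desc_nb[OF nb] xx yy S unfolding DP_def by blast
  qed
next
  show "\<forall>f. length f = n \<longrightarrow>
             (let A = M (map real (sort_desc f)) in
               topk_good n \<alpha> f (space A) \<in> sets A \<and> measure A (topk_good n \<alpha> f (space A)) \<ge> p)"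
  proof (intro allI impI)
    fix f :: "nat list" assume lf: "length f = n"
    define s where "s = map real (sort_desc f)"
    have ls: "length s = n" using lf by (simp add: s_def sort_desc_def)
    have eq: "topk_good n \<alpha> f \<Omega> = prefix_good n \<alpha> s \<Omega>" for \<Omega>
    proof -
      have "(\<Sum>i<k. s ! i) = real (topk_norm f k)" if "k \<in> {1..n}" for k
      proof -
        have "real (topk_norm f k) = (\<Sum>i<k. real (sort_desc f ! i))"
          using that lf unfolding topk_norm_def
          by (cases "k = n") (simp_all add: sum_list_sum_nth sort_desc_def min_def atLeast0LessThan)
        also have "\<dots> = (\<Sum>i<k. s ! i)" using that lf by (intro sum.cong) (auto simp: s_def sort_desc_def)
        finally show ?thesis by simp
      qed
      then show ?thesis unfolding topk_good_def prefix_good_def by auto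
    qed
    show "let A = M (map real (sort_desc f)) in
               topk_good n \<alpha> f (space A) \<in> sets A \<and> measure A (topk_good n \<alpha> f (space A)) \<ge> p"
      using acc ls eq unfolding s_def Let_def by simp
  qed
qed

end
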